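(* Let $\mathbb{K}$ be an algebraically closed field with $\operatorname{char}(\mathbb{K})\neq 2$. Let \[ A=\frac{\mathbb{K}\langle x_1,x_2,x_3,x_4\rangle}{\langle g_1,\ldots,g_6\rangle}, \] where \[ g_1=x_1x_2-x_2x_1,\quad g_2=x_2x_3-x_3x_2,\quad g_3=x_1x_3-x_3x_1,\quad g_4=x_1x_4-x_4x_1, \] \[ g_5=x_2x_4-x_4x_2,\quad g_6=x_3x_4-x_4x_3-x_1^2+x_2x_3. \] Then the point scheme of $A$ is $\mathcal{V}\big(x_1(x_1^2-x_2x_3),\,x_2(x_1^2-x_2x_3)\big)\subset\mathbb{P}^3$, which contains the double line $\mathcal{V}(x_1,x_2)$.
   Context: Point scheme: for a quadratic algebra $A=\mathbb{K}\langle x_1,\dots,x_4\rangle/\langle g_1,\dots,g_6\rangle$ with each $g_i=\sum_{j,k}c_{ijk}x_jx_k$ homogeneous of degree 2, let $D$ be the $6\times 4$ matrix with entries $D_{ik}=\sum_j c_{ijk}x_j$ (linear forms in $x_1,\dots,x_4$), so that $g_i(\alpha,\beta):=\sum_{j,k}c_{ijk}\alpha_j\beta_k=(D(\alpha)\beta)_i$ for $(\alpha,\beta)\in\mathbb{P}^3\times\mathbb{P}^3$. The point scheme of $A$ is the subscheme of $\mathbb{P}^3$ (homogeneous coordinates $x_1,\dots,x_4$) defined by the vanishing of all $4\times 4$ minors of $D$; its points are the $\alpha\in\mathbb{P}^3$ for which there exists $\beta\in\mathbb{P}^3$ with $g_i(\alpha,\beta)=0$ for all $i$. For homogeneous polynomials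 $f_1,\dots,f_r$, $\mathcal{V}(f_1,\dots,f_r)$ denotes their zero locus (subscheme) in $\mathbb{P}^3$. *)

theory Defs
  imports "HOL-Library.Poly_Mapping" "HOL-Computational_Algebra.Polynomial"
          "HOL-Combinatorics.Permutations"
begin

text \<open>Commutative polynomials over 'k: finitely supported maps from monomials
  (exponent vectors, variable x_i has index i, i = 1..4) to coefficients.\<close>
type_synonym 'k mpoly = "(nat \<Rightarrow>\<^sub>0 nat) \<Rightarrow>\<^sub>0 'k"

definition Var :: "nat \<Rightarrow> 'k::comm_ring_1 mpoly" where
  "Var i = Poly_Mapping.single (Poly_Mapping.single i 1) 1"

definition Const :: "'k::comm_ring_1 \<Rightarrow> 'k mpoly" where
  "Const a = Poly_Mapping.single 0 a"

inductive_set gen_ideal :: "'a::comm_ring_1 set \<Rightarrow> 'a set" for S where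
  zero: "0 \<in> gen_ideal S"
| gen: "s \<in> S \<Longrightarrow> s \<in> gen_ideal S"
| add: "p \<in> gen_ideal S \<Longrightarrow> q \<in> gen_ideal S \<Longrightarrow> p + q \<in> gen_ideal S"
| mult: "p \<in> gen_ideal S \<Longrightarrow> r * p \<in> gen_ideal S"

text \<open>Two homogeneous
  ideals define the same closed subscheme of P^3 iff their saturations coincide;
  the subscheme V(I) contains V(J) iff sat I \<subseteq> sat J.\<close>
definition saturation :: "'k::comm_ring_1 mpoly set \<Rightarrow> 'k mpoly set" where
  "saturation I = {f. \<exists>N. \<forall>i\<in>{1..4}. Var i ^ N * f \<in> I}"

definition same_subscheme :: "'k::comm_ring_1 mpoly set \<Rightarrow> 'k mpoly set \<Rightarrow> bool" where
  "same_subscheme I J \<longleftrightarrow> saturation I = saturation J"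

definition subscheme_of :: "'k::comm_ring_1 mpoly set \<Rightarrow> 'k mpoly set \<Rightarrow> bool" where
  "subscheme_of J I \<longleftrightarrow> saturation I \<subseteq> saturation J"

text \<open>The relations are g_i = \<Sum>_{j,k} c i j k x_j x_k (i = 1..6, j,k = 1..4).
  D is the 6x4 matrix of linear forms D_ik = \<Sum>_j c i j k x_j.\<close>
definition Dmat :: "(nat \<Rightarrow> nat \<Rightarrow> nat \<Rightarrow> 'k::comm_ring_1) \<Rightarrow> nat \<Rightarrow> nat \<Rightarrow> 'k mpoly" where
  "Dmat c i k = (\<Sum>j\<in>{1..4}. Const (c i j k) * Var j)"

definition det4 :: "(nat \<Rightarrow> nat \<Rightarrow> 'a::comm_ring_1) \<Rightarrow> 'a" where
  "det4 M = (\<Sum>p | p permutes {1..4}. of_int (sign p) * (\<Prod>a\<in>{1..4}. M a (p a)))"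

definition minors4 :: "(nat \<Rightarrow> nat \<Rightarrow> nat \<Rightarrow> 'k::comm_ring_1) \<Rightarrow> 'k mpoly set" where
  "minors4 c = {det4 (\<lambda>a b. Dmat c (r a) b) | r.
      1 \<le> r 1 \<and> r 1 < r 2 \<and> r 2 < r 3 \<and> r 3 < r 4 \<and> r 4 \<le> 6}"

definition point_scheme_ideal :: "(nat \<Rightarrow> nat \<Rightarrow> nat \<Rightarrow> 'k::comm_ring_1) \<Rightarrow> 'k mpoly set" where
  "point_scheme_ideal c = gen_ideal (minors4 c)"

definition cA :: "nat \<Rightarrow> nat \<Rightarrow> nat \<Rightarrow> 'k::comm_ring_1" where
  "cA i j k =
    (if (i,j,k) = (1,1,2) then 1 else if (i,j,k) = (1,2,1) then -1
     else if (i,j,k) = (2,2,3) then 1 else if (i,j,k) = (2,3,2) then -1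
     else if (i,j,k) = (3,1,3) then 1 else if (i,j,k) = (3,3,1) then -1
     else if (i,j,k) = (4,1,4) then 1 else if (i,j,k) = (4,4,1) then -1
     else if (i,j,k) = (5,2,4) then 1 else if (i,j,k) = (5,4,2) then -1
     else if (i,j,k) = (6,3,4) then 1 else if (i,j,k) = (6,4,3) then -1
     else if (i,j,k) = (6,1,1) then -1 else if (i,j,k) = (6,2,3) then 1
     else 0)"

end

theory Submission
  imports Defs
begin

lemma det4_expand:
  "det4 (M :: nat \<Rightarrow> nat \<Rightarrow> 'a::comm_ring_1) =
   M 1 1 * M 2 2 * M 3 3 * M 4 4 - M 1 1 * M 2 2 * M 3 4 * M 4 3 - M 1 1 * M 2 3 * M 3 2 * M 4 4 + M 1 1 * M 2 3 * M 3 4 * M 4 2 + M 1 1 * M 2 4 * M 3 2 * M 4 3 - M 1 1 * M 2 4 * M 3 3 * M 4 2 - M 1 2 * M 2 1 * M 3 3 * M 4 4 + M 1 2 * M 2 1 * M 3 4 * M 4 3 + M 1 2 * M 2 3 * M 3 1 * M 4 4 - M 1 2 * M 2 3 * M 3 4 * M 4 1 - M 1 2 * M 2 4 * M 3 1 * M 4 3 + M 1 2 * M 2 4 * M 3 3 * M 4 1 + M 1 3 * M 2 1 * M 3 2 * M 4 4 - M 1 3 * M 2 1 * M 3 4 * M 4 2 - M 1 3 * M 2 2 * M 3 1 * M 4 4 + M 1 3 * M 2 2 * M 3 4 * M 4 1 + M 1 3 * M 2 4 * M 3 1 * M 4 2 - M 1 3 * M 2 4 * M 3 2 * M 4 1 -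 M 1 4 * M 2 1 * M 3 2 * M 4 3 + M 1 4 * M 2 1 * M 3 3 * M 4 2 + M 1 4 * M 2 2 * M 3 1 * M 4 3 - M 1 4 * M 2 2 * M 3 3 * M 4 1 - M 1 4 * M 2 3 * M 3 1 * M 4 2 + M 1 4 * M 2 3 * M 3 2 * M 4 1"
proof -
  have e: "{1..4::nat} = insert 1 (insert 2 (insert 3 (insert 4 {})))" by auto
  show ?thesis
    unfolding det4_def e
    by (simp add: sum_over_permutations_insert sign_compose permutation_compose
          permutation_swap_id sign_swap_id transpose_def algebra_simps)
qed

lemma Const_simps: "Const 0 = 0" "Const 1 = 1" "Const (-1) = -1"
  by (simp_all add: Const_def single_uminus)

lemma Dv:
  shows "Dmat (cA :: nat \<Rightarrow> nat \<Rightarrow> nat \<Rightarrow> 'k::comm_ring_1) 1 1 = - Var 2"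
  and "Dmat (cA :: nat \<Rightarrow> nat \<Rightarrow> nat \<Rightarrow> 'k::comm_ring_1) 1 2 = Var 1"
  and "Dmat (cA :: nat \<Rightarrow> nat \<Rightarrow> nat \<Rightarrow> 'k::comm_ring_1) 1 3 = 0"
  and "Dmat (cA :: nat \<Rightarrow> nat \<Rightarrow> nat \<Rightarrow> 'k::comm_ring_1) 1 4 = 0"
  and "Dmat (cA :: nat \<Rightarrow> nat \<Rightarrow> nat \<Rightarrow> 'k::comm_ring_1) 2 1 = 0"
  and "Dmat (cA :: nat \<Rightarrow> nat \<Rightarrow> nat \<Rightarrow> 'k::comm_ring_1) 2 2 = - Var 3"
  and "Dmat (cA :: nat \<Rightarrow> nat \<Rightarrow> nat \<Rightarrow> 'k::comm_ring_1) 2 3 = Var 2"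
  and "Dmat (cA :: nat \<Rightarrow> nat \<Rightarrow> nat \<Rightarrow> 'k::comm_ring_1) 2 4 = 0"
  and "Dmat (cA :: nat \<Rightarrow> nat \<Rightarrow> nat \<Rightarrow> 'k::comm_ring_1) 3 1 = - Var 3"
  and "Dmat (cA :: nat \<Rightarrow> nat \<Rightarrow> nat \<Rightarrow> 'k::comm_ring_1) 3 2 = 0"
  and "Dmat (cA :: nat \<Rightarrow> nat \<Rightarrow> nat \<Rightarrow> 'k::comm_ring_1) 3 3 = Var 1"
  and "Dmat (cA :: nat \<Rightarrow> nat \<Rightarrow> nat \<Rightarrow> 'k::comm_ring_1) 3 4 = 0"
  and "Dmat (cA :: nat \<Rightarrow> nat \<Rightarrow> nat \<Rightarrow> 'k::comm_ring_1) 4 1 = - Var 4"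
  and "Dmat (cA :: nat \<Rightarrow> nat \<Rightarrow> nat \<Rightarrow> 'k::comm_ring_1) 4 2 = 0"
  and "Dmat (cA :: nat \<Rightarrow> nat \<Rightarrow> nat \<Rightarrow> 'k::comm_ring_1) 4 3 = 0"
  and "Dmat (cA :: nat \<Rightarrow> nat \<Rightarrow> nat \<Rightarrow> 'k::comm_ring_1) 4 4 = Var 1"
  and "Dmat (cA :: nat \<Rightarrow> nat \<Rightarrow> nat \<Rightarrow> 'k::comm_ring_1) 5 1 = 0"
  and "Dmat (cA :: nat \<Rightarrow> nat \<Rightarrow> nat \<Rightarrow> 'k::comm_ring_1) 5 2 = - Var 4"
  and "Dmat (cA :: nat \<Rightarrow> nat \<Rightarrow> nat \<Rightarrow> 'k::comm_ring_1) 5 3 = 0"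
  and "Dmat (cA :: nat \<Rightarrow> nat \<Rightarrow> nat \<Rightarrow> 'k::comm_ring_1) 5 4 = Var 2"
  and "Dmat (cA :: nat \<Rightarrow> nat \<Rightarrow> nat \<Rightarrow> 'k::comm_ring_1) 6 1 = - Var 1"
  and "Dmat (cA :: nat \<Rightarrow> nat \<Rightarrow> nat \<Rightarrow> 'k::comm_ring_1) 6 2 = 0"
  and "Dmat (cA :: nat \<Rightarrow> nat \<Rightarrow> nat \<Rightarrow> 'k::comm_ring_1) 6 3 = Var 2 - Var 4"
  and "Dmat (cA :: nat \<Rightarrow> nat \<Rightarrow> nat \<Rightarrow> 'k::comm_ring_1) 6 4 = Var 3"
  by (simp_all add: Dmat_def cA_def Const_simps eval_nat_numeral)

definition R :: "nat \<Rightarrow> nat \<Rightarrow> nat \<Rightarrow> nat \<Rightarrow> nat \<Rightarrow> nat" where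
  "R a b c d x = (if x = 1 then a else if x = 2 then b else if x = 3 then c else d)"

definition DD :: "nat \<Rightarrow> nat \<Rightarrow> nat \<Rightarrow> nat \<Rightarrow> 'k::comm_ring_1 mpoly" where
  "DD a b c d = det4 (\<lambda>x y. Dmat cA (R a b c d x) y)"

definition F :: "'k::comm_ring_1 mpoly" where "F = Var 1 ^ 2 - Var 2 * Var 3"

lemma DD_vals:
  shows "DD 1 2 3 4 = 0"
  and "DD 1 2 3 5 = 0"
  and "DD 1 2 3 6 = 0"
  and "DD 1 2 4 5 = 0"
  and "DD 1 2 4 6 = Var 2 * (Var 1 * F)"
  and "DD 1 2 5 6 = Var 2 * (Var 2 * F)"
  and "DD 1 3 4 5 = 0"
  and "DD 1 3 4 6 = Var 1 * (Var 1 * F)"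
  and "DD 1 3 5 6 = Var 2 * (Var 1 * F)"
  and "DD 1 4 5 6 = 0"
  and "DD 2 3 4 5 = 0"
  and "DD 2 3 4 6 = (- Var 3) * (Var 1 * F)"
  and "DD 2 3 5 6 = (- Var 3) * (Var 2 * F)"
  and "DD 2 4 5 6 = (- Var 4) * (Var 2 * F)"
  and "DD 3 4 5 6 = (- Var 4) * (Var 1 * F)"
  unfolding DD_def det4_expand R_def F_def
  by (simp_all add: Dv Dv[simplified] algebra_simps power2_eq_square)

lemma tuples:
  assumes "1 \<le> a" "a < b" "b < c" "c < d" "d \<le> (6::nat)"
  shows "(a,b,c,d) = (1,2,3,4) \<or> (a,b,c,d) = (1,2,3,5) \<or> (a,b,c,d) = (1,2,3,6) \<or> (a,b,c,d) = (1,2,4,5) \<or> (a,b,c,d) = (1,2,4,6) \<or> (a,b,c,d) = (1,2,5,6) \<or> (a,b,c,d) = (1,3,4,5) \<or> (a,b,c,d) = (1,3,4,6) \<or> (a,b,c,d) = (1,3,5,6) \<or> (a,b,c,d) = (1,4,5,6) \<or> (a,b,c,d) = (2,3,4,5) \<or> (a,b,c,d) = (2,3,4,6) \<or> (a,b,c,d) = (2,3,5,6) \<or> (a,b,c,d) = (2,4,5,6) \<or> (a,b,c,d) = (3,4,5,6)"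
proof -
  have A: "a = 1 \<or> a = 2 \<or> a = 3" using assms by linarith
  have B: "b = 2 \<or> b = 3 \<or> b = 4" using assms by linarith
  have C: "c = 3 \<or> c = 4 \<or> c = 5" using assms by linarith
  have D: "d = 4 \<or> d = 5 \<or> d = 6" using assms by linarith
  show ?thesis using A B C D assms by (elim disjE) simp_all
qed

lemma gi_lin: "p \<in> gen_ideal S \<Longrightarrow> q \<in> gen_ideal S \<Longrightarrow> a * p + b * q \<in> gen_ideal S"
  by (intro gen_ideal.add gen_ideal.mult)

lemma gi_mult_gen: "s \<in> S \<Longrightarrow> p * s \<in> gen_ideal S"
  by (intro gen_ideal.mult gen_ideal.gen)

lemma gi_sub: "S \<subseteq> gen_ideal T \<Longrightarrow> gen_ideal S \<subseteq> gen_ideal T"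
proof
  fix x assume S: "S \<subseteq> gen_ideal T" and "x \<in> gen_ideal S"
  from \<open>x \<in> gen_ideal S\<close> show "x \<in> gen_ideal T"
    by (induction x rule: gen_ideal.induct) (use S in \<open>auto intro: gen_ideal.intros\<close>)
qed

lemma gi_neg: "x \<in> gen_ideal S \<Longrightarrow> - x \<in> gen_ideal (S :: 'a::comm_ring_1 set)"
  using gen_ideal.mult[of x S "-1"] by simp

lemma sat_mono: "I \<subseteq> J \<Longrightarrow> saturation I \<subseteq> saturation J"
  unfolding saturation_def by blast

lemma minor_DD:
  assumes "m \<in> minors4 (cA :: nat \<Rightarrow> nat \<Rightarrow> nat \<Rightarrow> 'k::comm_ring_1)"
  shows "\<exists>a b c d. 1 \<le> a \<and> a < b \<and> b < c \<and> c < d \<and> d \<le> (6::nat) \<and> m = (DD a b c d :: 'k mpoly)"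
proof -
  obtain r where r: "m = det4 (\<lambda>a b. Dmat (cA :: nat \<Rightarrow> nat \<Rightarrow> nat \<Rightarrow> 'k) (r a) b)"
    "1 \<le> r 1 \<and> r 1 < r 2 \<and> r 2 < r 3 \<and> r 3 < r 4 \<and> r 4 \<le> 6"
    using assms unfolding minors4_def by blast
  have "m = DD (r 1) (r 2) (r 3) (r 4)"
    unfolding r(1) DD_def det4_expand R_def by simp
  then show ?thesis using r(2) by blast
qed

lemma DD_minor:
  assumes "1 \<le> a" "a < b" "b < c" "c < d" "d \<le> (6::nat)"
  shows "(DD a b c d :: 'k::comm_ring_1 mpoly) \<in> minors4 cA"
  unfolding minors4_def DD_def
  apply (rule CollectI)
  apply (rule exI[of _ "R a b c d"])
  using assms by (simp add: R_def)

lemma DD_in_I: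
  assumes "1 \<le> a" "a < b" "b < c" "c < d" "d \<le> (6::nat)"
  shows "k * (DD a b c d :: 'k::comm_ring_1 mpoly) \<in> point_scheme_ideal cA"
  unfolding point_scheme_ideal_def using DD_minor[OF assms] by (rule gi_mult_gen)

lemma I_sub_J:
  "point_scheme_ideal (cA :: nat \<Rightarrow> nat \<Rightarrow> nat \<Rightarrow> 'k::comm_ring_1)
     \<subseteq> gen_ideal {Var 1 * F, Var 2 * F}"
  unfolding point_scheme_ideal_def
proof (rule gi_sub, rule subsetI)
  fix m assume "m \<in> minors4 (cA :: nat \<Rightarrow> nat \<Rightarrow> nat \<Rightarrow> 'k)"
  then obtain a b c d where abcd: "1 \<le> a" "a < b" "b < c" "c < d" "d \<le> (6::nat)"
    and m: "m = DD a b c d" using minor_DD by blast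
  have g1: "p * (Var 1 * F) \<in> gen_ideal {Var 1 * F, Var 2 * (F :: 'k mpoly)}" for p
    by (rule gi_mult_gen) simp
  have g2: "p * (Var 2 * F) \<in> gen_ideal {Var 1 * F, Var 2 * (F :: 'k mpoly)}" for p
    by (rule gi_mult_gen) simp
  show "m \<in> gen_ideal {Var 1 * F, Var 2 * F}"
    using tuples[OF abcd] unfolding m
    by (elim disjE) (simp_all add: DD_vals DD_vals[simplified] g1 g2 g1[simplified] g2[simplified] gi_neg gen_ideal.zero)
qed

lemma J_to_I:
  assumes "q \<in> gen_ideal {Var 1 * F, Var 2 * (F :: 'k::comm_ring_1 mpoly)}" "i \<in> {1..4}"
  shows "Var i * q \<in> point_scheme_ideal (cA :: nat \<Rightarrow> nat \<Rightarrow> nat \<Rightarrow> 'k)"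
  using assms(1)
proof (induction q rule: gen_ideal.induct)
  case zero
  then show ?case unfolding point_scheme_ideal_def by (simp add: gen_ideal.zero)
next
  case (gen s)
  have i: "i = 1 \<or> i = 2 \<or> i = 3 \<or> i = 4" using assms(2) by auto
  have s: "s = Var 1 * F \<or> s = Var 2 * F" using gen by simp
  have e1: "Var 1 * (Var 1 * F) = 1 * (DD 1 3 4 6 :: 'k mpoly)" by (simp add: DD_vals DD_vals[simplified])
  have e2: "Var 2 * (Var 1 * F) = 1 * (DD 1 2 4 6 :: 'k mpoly)" by (simp add: DD_vals DD_vals[simplified] algebra_simps)
  have e3: "Var 3 * (Var 1 * F) = (-1) * (DD 2 3 4 6 :: 'k mpoly)" by (simp add: DD_vals DD_vals[simplified])
  have e4: "Var 4 * (Var 1 * F) = (-1) * (DD 3 4 5 6 :: 'k mpoly)" by (simp add: DD_vals DD_vals[simplified])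
  have f1: "Var 1 * (Var 2 * F) = 1 * (DD 1 2 4 6 :: 'k mpoly)" by (simp add: DD_vals DD_vals[simplified] algebra_simps)
  have f2: "Var 2 * (Var 2 * F) = 1 * (DD 1 2 5 6 :: 'k mpoly)" by (simp add: DD_vals DD_vals[simplified])
  have f3: "Var 3 * (Var 2 * F) = (-1) * (DD 2 3 5 6 :: 'k mpoly)" by (simp add: DD_vals DD_vals[simplified])
  have f4: "Var 4 * (Var 2 * F) = (-1) * (DD 2 4 5 6 :: 'k mpoly)" by (simp add: DD_vals DD_vals[simplified])
  note ins = DD_in_I[of 1 3 4 6] DD_in_I[of 1 2 4 6] DD_in_I[of 2 3 4 6] DD_in_I[of 3 4 5 6]
     DD_in_I[of 1 2 5 6] DD_in_I[of 2 3 5 6] DD_in_I[of 2 4 5 6]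
  show ?case using i s
    apply (elim disjE)
    apply (simp_all only: e1 e2 e3 e4 f1 f2 f3 f4)
    using ins ins[of 1, simplified] ins[of "-1", simplified] by simp_all
next
  case (add p q)
  then show ?case unfolding point_scheme_ideal_def
    by (simp add: distrib_left gen_ideal.add)
next
  case (mult p r)
  have "Var i * (r * p) = r * (Var i * p)" by (simp add: algebra_simps)
  then show ?case using mult.IH unfolding point_scheme_ideal_def
    by (metis gen_ideal.mult)
qed

theorem proposition6:
  assumes "(2::'k::alg_closed_field) \<noteq> 0"
  shows "same_subscheme (point_scheme_ideal (cA :: nat \<Rightarrow> nat \<Rightarrow> nat \<Rightarrow> 'k))
           (gen_ideal {Var 1 * (Var 1 ^ 2 - Var 2 * Var 3),
                       Var 2 * (Var 1 ^ 2 - Var 2 * Var 3)})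
       \<and> subscheme_of (gen_ideal {Var 1 ^ 2, Var 1 * Var 2, Var 2 ^ 2})
           (gen_ideal {Var 1 * (Var 1 ^ 2 - Var 2 * Var 3),
                       Var 2 * (Var 1 ^ 2 - Var 2 * Var 3) :: 'k mpoly})"
proof -
  let ?I = "point_scheme_ideal (cA :: nat \<Rightarrow> nat \<Rightarrow> nat \<Rightarrow> 'k)"
  let ?J = "gen_ideal {Var 1 * F, Var 2 * (F :: 'k mpoly)}"
  let ?K = "gen_ideal {Var 1 ^ 2, Var 1 * Var 2, Var 2 ^ 2 :: 'k mpoly}"
  have s1: "saturation ?I \<subseteq> saturation ?J" by (rule sat_mono[OF I_sub_J])
  have s2: "saturation ?J \<subseteq> saturation ?I"
  proof
    fix p assume "p \<in> saturation ?J"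
    then obtain N where N: "\<forall>i\<in>{1..4}. Var i ^ N * p \<in> ?J" unfolding saturation_def by blast
    have "\<forall>i\<in>{1..4}. Var i ^ Suc N * p \<in> ?I"
    proof
      fix i :: nat assume i: "i \<in> {1..4}"
      have "Var i * (Var i ^ N * p) \<in> ?I" using J_to_I[OF _ i] N i by blast
      then show "Var i ^ Suc N * p \<in> ?I" by (simp add: mult.assoc)
    qed
    then show "p \<in> saturation ?I" unfolding saturation_def by blast
  qed
  have JK: "?J \<subseteq> ?K"
  proof (rule gi_sub, rule subsetI)
    fix g assume g: "g \<in> {Var 1 * F, Var 2 * (F :: 'k mpoly)}"
    have eq1: "Var 1 * F = Var 1 * Var 1 ^ 2 + (- Var 3) * (Var 1 * (Var 2 :: 'k mpoly))"
      by (simp add: F_def algebra_simps power2_eq_square)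
    have eq2: "Var 2 * F = Var 2 * Var 1 ^ 2 + (- Var 3) * (Var 2 :: 'k mpoly) ^ 2"
      by (simp add: F_def algebra_simps power2_eq_square)
    have m1: "Var 1 * F \<in> ?K" unfolding eq1
      by (rule gi_lin[OF gen_ideal.gen gen_ideal.gen]) simp_all
    have m2: "Var 2 * F \<in> ?K" unfolding eq2
      by (rule gi_lin[OF gen_ideal.gen gen_ideal.gen]) simp_all
    show "g \<in> ?K" using g m1 m2 by blast
  qed
  show ?thesis
    unfolding same_subscheme_def subscheme_of_def F_def[symmetric]
    using s1 s2 sat_mono[OF JK] by blast
qed

end
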